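(* Let $G$ and $G'$ be deterministic finite automata over the alphabet $\Sigma$, let $\Sigma_o\subseteq\Sigma$, and let $H:=T_{\Sigma_o}(G)$ and $H':=T_{\Sigma_o}(G')$. If $G'\sqsubseteq G$, then $H'\,\tilde{\sqsubseteq}\,H$.
   Context: A DFA $G=(Q,\Sigma,\delta_G,q_0,Q_m)$ has finite state set $Q$, alphabet $\Sigma$, partial transition function $\delta_G$ (extended to strings), initial state $q_0$, marked states $Q_m$; $L(G)$ is the set of strings $s$ with $\delta_G(q_0,s)$ defined. $P_{\Sigma_o}$ is the natural projection $\Sigma^*\to\Sigma_o^*$ erasing events outside $\Sigma_o$. The $\epsilon$-reach of $q$ is $\epsilon R_G(q)=\{\delta_G(q,s): s\in\Sigma^*, P_{\Sigma_o}(s)=\epsilon, \delta_G(q,s)\text{ defined}\}$. The observer $T_{\Sigma_o}(G)$ is the DFA over $\Sigma_o$ whose states are subsets of $Q$, with initial state $\epsilon R_G(q_0)$ and transition function $\delta_H(B,\sigma)=\bigcup_{q\in B,\ \delta_G(q,\sigma)\text{ defined}}\epsilon R_G(\delta_G(q,\sigma))$ (defined iff this union is nonempty), restricted to its states reachable from the initial state; a state $B$ is marked iff $B\subseteq Q_m$. $G'$ is a subautomaton of $G$, $G'\sqsubseteq G$, if $\delta_{G'}(q'_0,s)=\delta_G(q_0,s)$ for all $s\in L(G')$ (with $q'_0$ the initial state of $G'$). For automata whose states are sets, $H'$ is a subobserver of $H$, $H'\,\tilde{\sqsubseteq}\,H$, if $\delta_{H'}(h'_0,s)\subseteq\delta_H(h_0,s)$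 for all $s\in L(H')$, where $h_0,h'_0$ are the respective initial states. *)

theory Defs
  imports Main
begin

record ('q, 'e) dfa =
  states :: "'q set"
  alph   :: "'e set"
  trans  :: "'q \<Rightarrow> 'e \<Rightarrow> 'q option"
  init   :: 'q
  marked :: "'q set"

definition is_dfa :: "('q, 'e) dfa \<Rightarrow> 'e set \<Rightarrow> bool" where
  "is_dfa G \<Sigma> \<longleftrightarrow> finite (states G) \<and> finite \<Sigma> \<and> alph G = \<Sigma> \<and>
     init G \<in> states G \<and> marked G \<subseteq> states G \<and>
     (\<forall>q e q'. trans G q e = Some q' \<longrightarrow> q \<in> states G \<and> e \<in> \<Sigma> \<and> q' \<in> states G)"

fun ext :: "('q \<Rightarrow> 'e \<Rightarrow> 'q option) \<Rightarrow> 'q \<Rightarrow> 'e list \<Rightarrow> 'q option" where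
  "ext d q [] = Some q"
| "ext d q (e # s) = (case d q e of None \<Rightarrow> None | Some q' \<Rightarrow> ext d q' s)"

abbreviation delta :: "('q, 'e) dfa \<Rightarrow> 'q \<Rightarrow> 'e list \<Rightarrow> 'q option" where
  "delta G \<equiv> ext (trans G)"

definition lang :: "('q, 'e) dfa \<Rightarrow> 'e list set" where
  "lang G = {s. s \<in> lists (alph G) \<and> delta G (init G) s \<noteq> None}"

definition proj :: "'e set \<Rightarrow> 'e list \<Rightarrow> 'e list" where
  "proj \<Sigma>o s = filter (\<lambda>e. e \<in> \<Sigma>o) s"

definition eps_reach :: "('q, 'e) dfa \<Rightarrow> 'e set \<Rightarrow> 'q \<Rightarrow> 'q set" where
  "eps_reach G \<Sigma>o q = {q'. \<exists>s \<in> lists (alph G). proj \<Sigma>o s = [] \<and> delta G q s = Some q'}"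

definition obs_step :: "('q, 'e) dfa \<Rightarrow> 'e set \<Rightarrow> 'q set \<Rightarrow> 'e \<Rightarrow> 'q set" where
  "obs_step G \<Sigma>o B \<sigma> = \<Union> {eps_reach G \<Sigma>o q' | q q'. q \<in> B \<and> trans G q \<sigma> = Some q'}"

definition obs_trans_raw :: "('q, 'e) dfa \<Rightarrow> 'e set \<Rightarrow> 'q set \<Rightarrow> 'e \<Rightarrow> 'q set option" where
  "obs_trans_raw G \<Sigma>o B \<sigma> =
     (if \<sigma> \<in> \<Sigma>o \<and> obs_step G \<Sigma>o B \<sigma> \<noteq> {} then Some (obs_step G \<Sigma>o B \<sigma>) else None)"

definition obs_reach :: "('q, 'e) dfa \<Rightarrow> 'e set \<Rightarrow> 'q set set" where
  "obs_reach G \<Sigma>o = {B. \<exists>s \<in> lists \<Sigma>o.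
      ext (obs_trans_raw G \<Sigma>o) (eps_reach G \<Sigma>o (init G)) s = Some B}"

definition observer :: "'e set \<Rightarrow> ('q, 'e) dfa \<Rightarrow> ('q set, 'e) dfa" where
  "observer \<Sigma>o G =
    \<lparr> states = obs_reach G \<Sigma>o,
      alph = \<Sigma>o,
      trans = (\<lambda>B \<sigma>. if B \<in> obs_reach G \<Sigma>o then obs_trans_raw G \<Sigma>o B \<sigma> else None),
      init = eps_reach G \<Sigma>o (init G),
      marked = {B \<in> obs_reach G \<Sigma>o. B \<subseteq> marked G} \<rparr>"

definition subautomaton :: "('q, 'e) dfa \<Rightarrow> ('q, 'e) dfa \<Rightarrow> bool" where
  "subautomaton G' G \<longleftrightarrow> (\<forall>s \<in> lang G'. delta G' (init G') s = delta G (init G) s)"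

definition subobserver :: "('q set, 'e) dfa \<Rightarrow> ('q set, 'e) dfa \<Rightarrow> bool" where
  "subobserver H' H \<longleftrightarrow> (\<forall>s \<in> lang H'. \<exists>B' B.
      delta H' (init H') s = Some B' \<and> delta H (init H) s = Some B \<and> B' \<subseteq> B)"

end

theory Submission
  imports Defs
begin

lemma ext_append: "ext d q (u @ v) = (case ext d q u of None \<Rightarrow> None | Some q' \<Rightarrow> ext d q' v)"
  by (induction u arbitrary: q) (auto split: option.splits)

definition EE :: "('q, 'e) dfa \<Rightarrow> 'e set \<Rightarrow> 'q set \<Rightarrow> 'e list \<Rightarrow> 'q set" where
  "EE G So B s = {q. \<exists>p\<in>B. \<exists>u\<in>lists (alph G). proj So u = s \<and> delta G p u = Some q}"

definition wfa :: "('q, 'e) dfa \<Rightarrow> bool" where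
  "wfa G \<longleftrightarrow> (\<forall>q e q'. trans G q e = Some q' \<longrightarrow> e \<in> alph G)"

lemma EE_nil_eps: "EE G So {p} [] = eps_reach G So p"
  unfolding EE_def eps_reach_def by auto

lemma EE_Cons_notin: "\<sigma> \<notin> So \<Longrightarrow> EE G So B (\<sigma> # s) = {}"
  unfolding EE_def proj_def by (auto simp: filter_eq_Cons_iff)

lemma EE_split:
  assumes "x \<in> EE G So B (\<sigma> # s)"
  shows "\<exists>q q'. q \<in> EE G So B [] \<and> trans G q \<sigma> = Some q' \<and> x \<in> EE G So {q'} s"
proof -
  from assms obtain p w where pw: "p \<in> B" "w \<in> lists (alph G)" "proj So w = \<sigma> # s" "delta G p w = Some x"
    unfolding EE_def by blast
  then obtain u v where uv: "w = u @ \<sigma> # v" "proj So u = []" "proj So v = s"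
    unfolding proj_def by (auto simp: filter_eq_Cons_iff)
  from pw(4) uv(1) obtain q where q: "delta G p u = Some q"
    by (auto simp: ext_append split: option.splits)
  with pw(4) uv(1) obtain q' where q': "trans G q \<sigma> = Some q'" "delta G q' v = Some x"
    by (auto simp: ext_append split: option.splits)
  have "q \<in> EE G So B []" using pw uv q unfolding EE_def by auto
  moreover have "x \<in> EE G So {q'} s" using pw uv q' unfolding EE_def by auto
  ultimately show ?thesis using q' by blast
qed

lemma EE_join:
  assumes "wfa G" "q \<in> EE G So B []" "trans G q \<sigma> = Some q'" "x \<in> EE G So {q'} s" "\<sigma> \<in> So"
  shows "x \<in> EE G So B (\<sigma> # s)"
proof -
  from assms(2) obtain p u where pu: "p \<in> B" "u \<in> lists (alph G)" "proj So u = []" "delta G p u = Some q"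
    unfolding EE_def by blast
  from assms(4) obtain v where v: "v \<in> lists (alph G)" "proj So v = s" "delta G q' v = Some x"
    unfolding EE_def by blast
  have "\<sigma> \<in> alph G" using assms(1,3) unfolding wfa_def by blast
  then show ?thesis unfolding EE_def
    using pu v assms(3,5) by (intro CollectI bexI[OF _ pu(1)] bexI[of _ "u @ \<sigma> # v"])
      (auto simp: ext_append proj_def)
qed

lemma EE_step: "wfa G \<Longrightarrow> \<sigma> \<in> So \<Longrightarrow> obs_step G So (EE G So B []) \<sigma> = EE G So B [\<sigma>]"
proof (rule set_eqI, rule iffI)
  fix x assume w: "wfa G" and s: "\<sigma> \<in> So" and "x \<in> obs_step G So (EE G So B []) \<sigma>"
  then obtain q q' where q: "q \<in> EE G So B []" "trans G q \<sigma> = Some q'" "x \<in> eps_reach G So q'"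
    unfolding obs_step_def by blast
  then show "x \<in> EE G So B [\<sigma>]" using EE_join[OF w q(1,2) _ s] EE_nil_eps by metis
next
  fix x assume "x \<in> EE G So B [\<sigma>]"
  from EE_split[OF this] show "x \<in> obs_step G So (EE G So B []) \<sigma>"
    unfolding obs_step_def EE_nil_eps by blast
qed

lemma EE_EE: "wfa G \<Longrightarrow> \<sigma> \<in> So \<Longrightarrow> EE G So (EE G So B [\<sigma>]) s = EE G So B (\<sigma> # s)"
proof (rule set_eqI, rule iffI)
  fix x assume w: "wfa G" and s: "\<sigma> \<in> So" and x: "x \<in> EE G So (EE G So B [\<sigma>]) s"
  then obtain p u where pu: "p \<in> EE G So B [\<sigma>]" "u \<in> lists (alph G)" "proj So u = s" "delta G p u = Some x"
    unfolding EE_def by blast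
  from EE_split[OF pu(1)] obtain q q' where q: "q \<in> EE G So B []" "trans G q \<sigma> = Some q'" "p \<in> EE G So {q'} []"
    by blast
  from q(3) obtain v where v: "v \<in> lists (alph G)" "proj So v = []" "delta G q' v = Some p"
    unfolding EE_def by blast
  have "x \<in> EE G So {q'} s" unfolding EE_def using pu v
    by (intro CollectI bexI[of _ q'] bexI[of _ "v @ u"]) (auto simp: ext_append proj_def)
  then show "x \<in> EE G So B (\<sigma> # s)" using EE_join[OF w q(1,2) _ s] by blast
next
  fix x assume w: "wfa G" and s: "\<sigma> \<in> So" and "x \<in> EE G So B (\<sigma> # s)"
  from EE_split[OF this(3)] obtain q q' where q: "q \<in> EE G So B []" "trans G q \<sigma> = Some q'" "x \<in> EE G So {q'} s"
    by blast
  from q(3) obtain p u where pu: "p = q'" "u \<in> lists (alph G)" "proj So u = s" "delta G q' u = Some x"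
    unfolding EE_def by blast
  have "q' \<in> EE G So {q'} []" unfolding EE_def by (intro CollectI bexI[of _ q'] bexI[of _ "[]"]) (auto simp: proj_def)
  then have "q' \<in> EE G So B [\<sigma>]" using EE_join[OF w q(1,2) _ s] by blast
  then show "x \<in> EE G So (EE G So B [\<sigma>]) s" unfolding EE_def using pu by blast
qed

lemma EE_nonempty: "B \<noteq> {} \<Longrightarrow> EE G So B [] \<noteq> {}"
proof -
  assume "B \<noteq> {}"
  then obtain p where "p \<in> B" by blast
  then have "p \<in> EE G So B []" unfolding EE_def
    by (intro CollectI bexI[of _ p] bexI[of _ "[]"]) (auto simp: proj_def)
  then show ?thesis by blast
qed

lemma EE_empty: "EE G So {} s = {}"
  unfolding EE_def by simp

lemma main_ext:
  assumes "wfa G" "B \<noteq> {}"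
  shows "ext (obs_trans_raw G So) (EE G So B []) s = (if EE G So B s = {} then None else Some (EE G So B s))"
  using assms(2)
proof (induction s arbitrary: B)
  case Nil
  then show ?case using EE_nonempty[OF Nil] by auto
next
  case (Cons \<sigma> s)
  show ?case
  proof (cases "\<sigma> \<in> So")
    case False
    then show ?thesis by (simp add: obs_trans_raw_def EE_Cons_notin)
  next
    case True
    note st = EE_step[OF assms(1) True, of B]
    show ?thesis
    proof (cases "EE G So B [\<sigma>] = {}")
      case True
      then have "EE G So B (\<sigma> # s) = {}"
        using EE_EE[OF assms(1) \<open>\<sigma> \<in> So\<close>, of B s] True EE_empty by metis
      then show ?thesis using True st by (simp add: obs_trans_raw_def)
    next
      case False
      have "EE G So (EE G So B [\<sigma>]) [] = EE G So B [\<sigma>]"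
        using EE_EE[OF assms(1) \<open>\<sigma> \<in> So\<close>, of B "[]"] .
      then have "ext (obs_trans_raw G So) (EE G So B [\<sigma>]) s
          = (if EE G So (EE G So B [\<sigma>]) s = {} then None else Some (EE G So (EE G So B [\<sigma>]) s))"
        using Cons.IH[OF False] by simp
      moreover have "obs_trans_raw G So (EE G So B []) \<sigma> = Some (EE G So B [\<sigma>])"
        using False st \<open>\<sigma> \<in> So\<close> by (simp add: obs_trans_raw_def)
      ultimately show ?thesis
        by (simp add: EE_EE[OF assms(1) \<open>\<sigma> \<in> So\<close>])
    qed
  qed
qed

lemma raw_lists: "ext (obs_trans_raw G So) B p = Some C \<Longrightarrow> p \<in> lists So"
  by (induction p arbitrary: B) (auto simp: obs_trans_raw_def split: option.splits if_splits)

lemma obs_delta: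
  assumes "ext (obs_trans_raw G So) (eps_reach G So (init G)) p = Some B"
  shows "delta (observer So G) B s = ext (obs_trans_raw G So) B s"
  using assms
proof (induction s arbitrary: p B)
  case Nil then show ?case by simp
next
  case (Cons \<sigma> s)
  have "B \<in> obs_reach G So" using Cons.prems raw_lists unfolding obs_reach_def by blast
  then have tr: "trans (observer So G) B \<sigma> = obs_trans_raw G So B \<sigma>"
    by (simp add: observer_def)
  show ?case
  proof (cases "obs_trans_raw G So B \<sigma>")
    case None then show ?thesis using tr by simp
  next
    case (Some C)
    have "ext (obs_trans_raw G So) (eps_reach G So (init G)) (p @ [\<sigma>]) = Some C"
      using Cons.prems Some by (simp add: ext_append)
    from Cons.IH[OF this] show ?thesis using tr Some by simp
  qed
qed

lemma obs_main:
  assumes "wfa G"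
  shows "delta (observer So G) (init (observer So G)) s
     = (if EE G So {init G} s = {} then None else Some (EE G So {init G} s))"
proof -
  have i: "init (observer So G) = eps_reach G So (init G)" by (simp add: observer_def)
  have "ext (obs_trans_raw G So) (eps_reach G So (init G)) [] = Some (eps_reach G So (init G))" by simp
  note d = obs_delta[OF this, of s]
  show ?thesis unfolding i d using main_ext[OF assms, of "{init G}" So s] by (simp add: EE_nil_eps)
qed

lemma dfa_wfa: "is_dfa G \<Sigma> \<Longrightarrow> wfa G"
  unfolding is_dfa_def wfa_def by blast

theorem theorem1:
  fixes G G' :: "('q, 'e) dfa" and \<Sigma> \<Sigma>o :: "'e set"
  assumes "is_dfa G \<Sigma>" and "is_dfa G' \<Sigma>" and "\<Sigma>o \<subseteq> \<Sigma>"
    and "subautomaton G' G"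
  shows "subobserver (observer \<Sigma>o G') (observer \<Sigma>o G)"
proof -
  have al: "alph G = \<Sigma>" "alph G' = \<Sigma>" using assms(1,2) unfolding is_dfa_def by auto
  have sub: "EE G' \<Sigma>o {init G'} s \<subseteq> EE G \<Sigma>o {init G} s" for s
  proof
    fix x assume "x \<in> EE G' \<Sigma>o {init G'} s"
    then obtain u where u: "u \<in> lists \<Sigma>" "proj \<Sigma>o u = s" "delta G' (init G') u = Some x"
      unfolding EE_def al by blast
    then have "u \<in> lang G'" unfolding lang_def al by auto
    then have "delta G (init G) u = Some x" using assms(4) u(3) unfolding subautomaton_def by auto
    then show "x \<in> EE G \<Sigma>o {init G} s" unfolding EE_def al using u by auto
  qed
  show ?thesis
    unfolding subobserver_def lang_def
    using obs_main[OF dfa_wfa[OF assms(1)], of \<Sigma>o] obs_main[OF dfa_wfa[OF assms(2)], of \<Sigma>o] sub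
    by (auto split: if_splits) blast+
qed

end
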